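(* Let $f:\mathbb D\to\mathbb D$ be analytic and suppose there is $c\in(0,1)$ with $\sup\{D_h(f)(z): z\in\mathbb D,\ |f(z)|\ge c\}<1$. Then $\sup\{D_h(f)(z):z\in\mathbb D\}<1$.
   Context: $D_h(f)(z)=\frac{(1-|z|^2)|f'(z)|}{1-|f(z)|^2}$; the supremum over the empty set is taken to be $0$. *)

theory Defs
  imports "HOL-Complex_Analysis.Complex_Analysis"
begin

definition hyp_deriv :: "(complex \<Rightarrow> complex) \<Rightarrow> complex \<Rightarrow> real" where
  "hyp_deriv f z = (1 - (cmod z)^2) * cmod (deriv f z) / (1 - (cmod (f z))^2)"

definition sup0 :: "real set \<Rightarrow> real" where
  "sup0 S = (if S = {} then 0 else Sup S)"

end

theory Submission
  imports Defs
begin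

lemma sq_lt1: "0 \<le> x \<Longrightarrow> x < 1 \<Longrightarrow> x^2 < (1::real)"
  using power_strict_mono[of x 1 2] by simp

definition mob :: "complex \<Rightarrow> complex \<Rightarrow> complex" where
  "mob b z = (z - b) / (1 - cnj b * z)"

lemma mob_den_nz: "cmod b < 1 \<Longrightarrow> cmod z < 1 \<Longrightarrow> 1 - cnj b * z \<noteq> 0"
proof
  assume "cmod b < 1" "cmod z < 1" "1 - cnj b * z = 0"
  then have "cnj b * z = 1" by simp
  then have "cmod b * cmod z = 1" by (metis complex_mod_cnj norm_mult norm_one)
  moreover have "cmod b * cmod z < 1"
    using \<open>cmod b < 1\<close> \<open>cmod z < 1\<close> mult_strict_mono'[of "cmod b" 1 "cmod z" 1] by simp
  ultimately show False by simp
qed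

lemma norm_sq_identity:
  "(cmod (1 - cnj b * z))^2 - (cmod (z - b))^2 = (1 - (cmod b)^2) * (1 - (cmod z)^2)"
  unfolding cmod_power2 by (simp add: power2_eq_square algebra_simps)

lemma mob_norm_sq:
  assumes "cmod b < 1" "cmod z < 1"
  shows "1 - (cmod (mob b z))^2 = (1 - (cmod b)^2) * (1 - (cmod z)^2) / (cmod (1 - cnj b * z))^2"
proof -
  have nz: "cmod (1 - cnj b * z) \<noteq> 0" using mob_den_nz[OF assms] by simp
  show ?thesis using norm_sq_identity[of b z] nz
    by (simp add: mob_def norm_divide power_divide field_simps)
qed

lemma mob_norm_lt1:
  assumes "cmod b < 1" "cmod z < 1"
  shows "cmod (mob b z) < 1"
proof -
  have "0 < (1 - (cmod b)^2) * (1 - (cmod z)^2) / (cmod (1 - cnj b * z))^2"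
    using assms mob_den_nz[OF assms] by (intro divide_pos_pos mult_pos_pos) (auto simp: power_less_one_iff abs_square_less_1)
  then have "(cmod (mob b z))^2 < 1" using mob_norm_sq[OF assms] by simp
  then show ?thesis by (simp add: power_less_one_iff abs_square_less_1)
qed

lemma mob_deriv:
  assumes "1 - cnj b * z \<noteq> 0"
  shows "(mob b has_field_derivative (1 - of_real ((cmod b)^2)) / (1 - cnj b * z)^2) (at z)"
proof -
  have d: "((\<lambda>z. (z - b) / (1 - cnj b * z)) has_field_derivative
     ((1 * (1 - cnj b * z) - (z - b) * (0 - cnj b * 1)) / (1 - cnj b * z)^2)) (at z)"
    using assms by (intro derivative_eq_intros) (auto simp: power2_eq_square)
  have e: "(1 * (1 - cnj b * z) - (z - b) * (0 - cnj b * 1)) = 1 - of_real ((cmod b)^2)"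
  proof -
    have "of_real ((cmod b)^2) = b * cnj b" using complex_norm_square[of b] by simp
    then show ?thesis by (simp add: algebra_simps)
  qed
  show ?thesis using d unfolding e mob_def[abs_def] .
qed

lemma mob_deriv_identity:
  assumes "cmod b < 1" "cmod z < 1"
  shows "(1 - (cmod z)^2) * cmod ((1 - of_real ((cmod b)^2)) / (1 - cnj b * z)^2) = 1 - (cmod (mob b z))^2"
proof -
  have "cmod (1 - of_real ((cmod b)^2) :: complex) = 1 - (cmod b)^2"
  proof -
    have "(1 - of_real ((cmod b)^2) :: complex) = of_real (1 - (cmod b)^2)" by simp
    then show ?thesis using sq_lt1[of "cmod b"] assms by (simp only: norm_of_real) simp
  qed
  then show ?thesis using mob_norm_sq[OF assms]
    by (simp add: norm_divide norm_power)
qed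

lemma mob_inv: "cmod b < 1 \<Longrightarrow> cmod z < 1 \<Longrightarrow> mob (-b) (mob b z) = z"
  using Moebius_function_compose[of "-b" b z] by (simp add: Moebius_function_simple mob_def[abs_def])

lemma mob_self[simp]: "mob b b = 0" by (simp add: mob_def)
lemma mob_zero[simp]: "mob (-b) 0 = b" by (simp add: mob_def)

lemma mob_holo: assumes "cmod b < 1" shows "mob b holomorphic_on ball 0 1"
proof -
  have "Moebius_function 0 b = mob b" by (rule ext) (simp add: Moebius_function_simple mob_def)
  then show ?thesis using Moebius_function_holomorphic[of b 0] assms by simp
qed

lemma comp_holo:
  assumes hol: "F holomorphic_on ball 0 1" and into: "F ` ball 0 1 \<subseteq> ball 0 1"
    and a: "cmod a < 1" and b: "cmod b < 1"
  shows "(\<lambda>x. mob a (F (mob b x))) holomorphic_on ball 0 1"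
    and "(\<lambda>x. mob a (F (mob b x))) ` ball 0 1 \<subseteq> ball 0 1"
proof -
  have mb: "mob b ` ball 0 1 \<subseteq> ball 0 1" using mob_norm_lt1[OF b] by auto
  have ma: "mob a ` ball 0 1 \<subseteq> ball 0 1" using mob_norm_lt1[OF a] by auto
  have h1: "(F \<circ> mob b) holomorphic_on ball 0 1"
    by (rule holomorphic_on_compose_gen[OF mob_holo[OF b] hol mb])
  have h2: "(F \<circ> mob b) ` ball 0 1 \<subseteq> ball 0 1"
    by (metis image_comp image_mono order_trans into mb)
  have h3: "(mob a \<circ> (F \<circ> mob b)) holomorphic_on ball 0 1"
    by (rule holomorphic_on_compose_gen[OF h1 mob_holo[OF a] h2])
  have h4: "(mob a \<circ> (F \<circ> mob b)) ` ball 0 1 \<subseteq> ball 0 1"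
    by (metis image_comp image_mono order_trans h2 ma)
  have e: "(\<lambda>x. mob a (F (mob b x))) = mob a \<circ> (F \<circ> mob b)" by (simp add: o_def)
  show "(\<lambda>x. mob a (F (mob b x))) holomorphic_on ball 0 1" unfolding e by (rule h3)
  show "(\<lambda>x. mob a (F (mob b x))) ` ball 0 1 \<subseteq> ball 0 1" unfolding e by (rule h4)
qed

lemma hd_inv:
  assumes hol: "F holomorphic_on ball 0 1" and into: "F ` ball 0 1 \<subseteq> ball 0 1"
    and a: "cmod a < 1" and b: "cmod b < 1" and w: "cmod w < 1"
  shows "hyp_deriv (\<lambda>x. mob a (F (mob b x))) w = hyp_deriv F (mob b w)"
proof -
  define u where "u = mob b w"
  define v where "v = F u"
  have u: "cmod u < 1" using mob_norm_lt1[OF b w] u_def by simp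
  have v: "cmod v < 1" using into u unfolding v_def by (metis image_subset_iff mem_ball_0)
  define P where "P = (1 - of_real ((cmod b)^2)) / (1 - cnj b * w)^2"
  define Q where "Q = (1 - of_real ((cmod a)^2)) / (1 - cnj a * v)^2"
  have dP: "(mob b has_field_derivative P) (at w)" unfolding P_def
    by (rule mob_deriv[OF mob_den_nz[OF b w]])
  have dQ: "(mob a has_field_derivative Q) (at (F (mob b w)))" unfolding Q_def v_def u_def
    by (rule mob_deriv[OF mob_den_nz[OF a]]) (use v v_def u_def in simp)
  have dF: "(F has_field_derivative deriv F (mob b w)) (at (mob b w))"
    by (rule holomorphic_derivI[OF hol open_ball]) (use u u_def in simp)
  have "((\<lambda>x. mob a (F (mob b x))) has_field_derivative Q * (deriv F (mob b w) * P)) (at w)"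
    by (rule DERIV_chain2[OF dQ DERIV_chain2[OF dF dP]])
  then have dG: "deriv (\<lambda>x. mob a (F (mob b x))) w = Q * (deriv F u * P)"
    using DERIV_imp_deriv u_def by blast
  have iP: "(1 - (cmod w)^2) * cmod P = 1 - (cmod u)^2"
    unfolding P_def u_def by (rule mob_deriv_identity[OF b w])
  have iQ: "(1 - (cmod v)^2) * cmod Q = 1 - (cmod (mob a v))^2"
    unfolding Q_def by (rule mob_deriv_identity[OF a v])
  have Qnz: "cmod Q \<noteq> 0"
  proof -
    have "(1 - of_real ((cmod a)^2) :: complex) \<noteq> 0"
    proof
      assume "(1 - of_real ((cmod a)^2) :: complex) = 0"
      then have "(cmod a)^2 = 1" by (metis eq_iff_diff_eq_0 of_real_eq_1_iff)
      then show False using a power_strict_mono[of "cmod a" 1 2] by simp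
    qed
    then show ?thesis unfolding Q_def using mob_den_nz[OF a v] by simp
  qed
  have "hyp_deriv (\<lambda>x. mob a (F (mob b x))) w
      = ((1 - (cmod w)^2) * cmod P) * cmod (deriv F u) * cmod Q / (1 - (cmod (mob a v))^2)"
    unfolding hyp_deriv_def dG u_def v_def by (simp add: norm_mult algebra_simps)
  also have "\<dots> = (1 - (cmod u)^2) * cmod (deriv F u) * cmod Q / ((1 - (cmod v)^2) * cmod Q)"
    unfolding iP iQ ..
  also have "\<dots> = hyp_deriv F u"
    unfolding hyp_deriv_def v_def using Qnz by simp
  finally show ?thesis unfolding u_def .
qed

lemma mob_0[simp]: "mob 0 z = z" by (simp add: mob_def)

lemma hyp_deriv_at0: "G 0 = 0 \<Longrightarrow> hyp_deriv G 0 = cmod (deriv G 0)"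
  by (simp add: hyp_deriv_def)

lemma SP:
  assumes hol: "F holomorphic_on ball 0 1" and into: "F ` ball 0 1 \<subseteq> ball 0 1"
    and z: "cmod z < 1"
  shows "hyp_deriv F z \<le> 1" and "(1 - (cmod z)^2) * cmod (deriv F z) \<le> 1 - (cmod (F z))^2"
proof -
  have Fz: "cmod (F z) < 1" using into z by (metis image_subset_iff mem_ball_0)
  have mz: "cmod (-z) < 1" using z by simp
  define G where "G = (\<lambda>x. mob (F z) (F (mob (-z) x)))"
  have hG: "G holomorphic_on ball 0 1" and iG: "G ` ball 0 1 \<subseteq> ball 0 1"
    unfolding G_def using comp_holo[OF hol into Fz mz] by auto
  have G0: "G 0 = 0" unfolding G_def by simp
  have no: "\<And>x. cmod x < 1 \<Longrightarrow> cmod (G x) < 1" using iG by (metis image_subset_iff mem_ball_0)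
  have "cmod (deriv G 0) \<le> 1"
    using Schwarz_Lemma(2)[OF hG G0 no, of 0] by simp
  moreover have "hyp_deriv G 0 = hyp_deriv F z"
    unfolding G_def using hd_inv[OF hol into Fz mz, of 0] by simp
  ultimately show 1: "hyp_deriv F z \<le> 1" using hyp_deriv_at0[of G, OF G0] by simp
  have "0 < 1 - (cmod (F z))^2" using sq_lt1[of "cmod (F z)"] Fz by simp
  then show "(1 - (cmod z)^2) * cmod (deriv F z) \<le> 1 - (cmod (F z))^2"
    using 1 unfolding hyp_deriv_def by (simp add: divide_le_eq_1)
qed

lemma SP2:
  assumes hol: "F holomorphic_on ball 0 1" and into: "F ` ball 0 1 \<subseteq> ball 0 1"
    and w: "cmod w < 1"
  shows "cmod (F w - F 0) \<le> cmod w * cmod (1 - cnj (F 0) * F w)"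
proof -
  have F0: "cmod (F 0) < 1" using into by (metis image_subset_iff mem_ball_0 norm_zero zero_less_one)
  have Fw: "cmod (F w) < 1" using into w by (metis image_subset_iff mem_ball_0)
  define G where "G = (\<lambda>x. mob (F 0) (F (mob 0 x)))"
  have hG: "G holomorphic_on ball 0 1" and iG: "G ` ball 0 1 \<subseteq> ball 0 1"
    unfolding G_def using comp_holo[OF hol into F0, of 0] by auto
  have G0: "G 0 = 0" unfolding G_def by simp
  have no: "\<And>x. cmod x < 1 \<Longrightarrow> cmod (G x) < 1" using iG by (metis image_subset_iff mem_ball_0)
  have "cmod (G w) \<le> cmod w" using Schwarz_Lemma(1)[OF hG G0 no w] .
  moreover have "G w = (F w - F 0) / (1 - cnj (F 0) * F w)" unfolding G_def mob_def by simp
  moreover have "cmod (1 - cnj (F 0) * F w) > 0" using mob_den_nz[OF F0 Fw] by simp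
  ultimately show ?thesis by (simp add: norm_divide divide_le_eq mult.commute)
qed

lemma far_point:
  assumes a: "cmod a < 1" and u: "cmod u < 1" and cu: "c \<le> cmod u"
    and re: "0 \<le> Re (cnj a * u)" and c: "0 < c" "c < 1"
  shows "c \<le> cmod (mob (-a) u)"
proof -
  have e1: "(cmod (u + a))^2 = (cmod u)^2 + (cmod a)^2 + 2 * Re (cnj a * u)"
    unfolding cmod_power2 by (simp add: power2_eq_square algebra_simps)
  have e2: "(cmod (1 + cnj a * u))^2 = 1 + (cmod a)^2 * (cmod u)^2 + 2 * Re (cnj a * u)"
    unfolding cmod_power2 by (simp add: power2_eq_square algebra_simps)
  define A where "A = (cmod a)^2"
  define U where "U = (cmod u)^2"
  define X where "X = Re (cnj a * u)"
  have A: "0 \<le> A" "A < 1" unfolding A_def using sq_lt1[of "cmod a"] a by auto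
  have U: "c^2 \<le> U" "U < 1" unfolding U_def using sq_lt1[of "cmod u"] u power_mono[OF cu, of 2] c
    by auto
  have c2: "c^2 < 1" "0 < c^2" using sq_lt1[of c] c by auto
  have U0: "0 \<le> U" unfolding U_def by simp
  have "c^2 * (1 + A * U + 2 * X) \<le> U + A + 2 * X"
  proof -
    have "c^2 * U \<le> 1 * 1" using mult_mono[of "c^2" 1 U 1] U U0 c2 by linarith
    then have "0 \<le> A * (1 - c^2 * U)" using A by (intro mult_nonneg_nonneg) auto
    moreover have "0 \<le> X * (1 - c^2)" using re c2 X_def by simp
    ultimately show ?thesis using U by (simp add: algebra_simps)
  qed
  then have "(c * cmod (1 + cnj a * u))^2 \<le> (cmod (u + a))^2"
    unfolding power_mult_distrib e1 e2 A_def U_def X_def by simp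
  then have "c * cmod (1 + cnj a * u) \<le> cmod (u + a)"
    by (rule power2_le_imp_le) simp
  moreover have "cmod (1 + cnj a * u) > 0" using mob_den_nz[of "-a" u] a u by simp
  ultimately show ?thesis unfolding mob_def by (simp add: norm_divide le_divide_eq)
qed

lemma real_core:
  fixes r t s D :: real
  assumes r: "0 < r" "r < 1" and t: "0 \<le> t" "t \<le> s" "s \<le> 1" and D: "0 \<le> D"
    and hD: "(1 - r^2) * s - r * (1 - s^2) \<le> (1 - r^2) * D"
    and L: "0 < ((1 - r^2) * t - r * (1 - t^2)) / (1 - r^2 * t^2)"
  shows "((1 - r^2) * t - r * (1 - t^2)) / (1 - r^2 * t^2) \<le> (1 - r^2) * D / (1 - (r * s)^2)"
proof -
  have r2: "r^2 < 1" "0 < r^2" using sq_lt1[of r] r by auto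
  have "t^2 \<le> s^2" using power_mono[of t s 2] t by auto
  have "s^2 \<le> 1" using power_mono[of s 1 2] t by auto
  have "r^2 * t^2 \<le> r^2 * s^2" using \<open>t^2 \<le> s^2\<close> r2 by (intro mult_left_mono) auto
  have "r^2 * s^2 \<le> r^2 * 1" using \<open>s^2 \<le> 1\<close> r2 by (intro mult_left_mono) auto
  then have "r^2 * s^2 < 1" using r2 by linarith
  have den1: "0 < 1 - r^2 * t^2" using \<open>r^2 * t^2 \<le> r^2 * s^2\<close> \<open>r^2 * s^2 < 1\<close> by linarith
  have den2: "0 < 1 - r^2 * s^2" using \<open>r^2 * s^2 < 1\<close> by linarith
  have N: "0 < (1 - r^2) * t - r * (1 - t^2)" using L den1 by (simp add: zero_less_divide_iff)
  have mono: "(1 - r^2) * t - r * (1 - t^2) \<le> (1 - r^2) * s - r * (1 - s^2)"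
  proof -
    have "(1 - r^2) * t \<le> (1 - r^2) * s" using t r2 by (intro mult_left_mono) auto
    moreover have "r * (1 - s^2) \<le> r * (1 - t^2)" using \<open>t^2 \<le> s^2\<close> r by (intro mult_left_mono) auto
    ultimately show ?thesis by linarith
  qed
  have "((1 - r^2) * t - r * (1 - t^2)) / (1 - r^2 * t^2) \<le> ((1 - r^2) * t - r * (1 - t^2)) / (1 - r^2 * s^2)"
    using N den1 den2 \<open>r^2 * t^2 \<le> r^2 * s^2\<close> by (intro divide_left_mono) auto
  also have "\<dots> \<le> (1 - r^2) * D / (1 - r^2 * s^2)"
    using mono hD den2 by (intro divide_right_mono) auto
  finally show ?thesis by (simp add: power_mult_distrib)
qed

lemma cnj_mul_self: "cnj z * z = of_real ((cmod z)^2)"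
  using complex_norm_square[of z] by (simp add: mult.commute)
lemma cnj_sgn1: "cnj z * sgn z = of_real (cmod z)"
proof (cases "z = 0")
  case False
  have "cnj z * sgn z = cnj z * z / of_real (cmod z)" by (simp add: sgn_div_norm scaleR_conv_of_real field_simps)
  also have "\<dots> = of_real (cmod z)" using False unfolding cnj_mul_self by (simp add: power2_eq_square)
  finally show ?thesis .
qed simp
lemma cnj_sgn2: "cnj (sgn z) * z = of_real (cmod z)"
proof (cases "z = 0")
  case False
  have "cnj (sgn z) * z = cnj z * z / of_real (cmod z)" by (simp add: sgn_div_norm scaleR_conv_of_real field_simps)
  also have "\<dots> = of_real (cmod z)" using False unfolding cnj_mul_self by (simp add: power2_eq_square)
  finally show ?thesis .
qed simp

lemma norm_le1_cases:
  assumes holh: "h holomorphic_on ball 0 1" and hle: "\<And>z. cmod z < 1 \<Longrightarrow> cmod (h z) \<le> 1"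
  shows "(\<forall>z. cmod z < 1 \<longrightarrow> h z = h 0 \<and> cmod (h z) = 1) \<or> (\<forall>z. cmod z < 1 \<longrightarrow> cmod (h z) < 1)"
proof (cases "\<exists>z. cmod z < 1 \<and> cmod (h z) = 1")
  case True
  then obtain z where z: "cmod z < 1" "cmod (h z) = 1" by blast
  have sub: "ball z (1 - cmod z) \<subseteq> ball 0 1" by (simp add: ball_subset_ball_iff)
  have "h constant_on ball 0 1"
  proof (rule Schwarz2[OF holh, of "1 - cmod z" z])
    show "0 < 1 - cmod z" using z by simp
    show "ball z (1 - cmod z) \<subseteq> ball 0 1" by (rule sub)
    fix x assume "cmod (z - x) < 1 - cmod z"
    then have "x \<in> ball 0 1" using sub by (auto simp: dist_norm)
    then show "cmod (h x) \<le> cmod (h z)" using hle z by simp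
  qed
  then obtain k where k: "\<And>x. x \<in> ball 0 1 \<Longrightarrow> h x = k" by (auto simp: constant_on_def)
  have "h z = k" using k z by simp
  then show ?thesis using k z by auto
next
  case False
  then show ?thesis using hle by (auto simp: less_le)
qed

theorem mainTheorem11:
  fixes f :: "complex \<Rightarrow> complex" and c :: real
  assumes "f holomorphic_on ball 0 1"
    and "f ` ball 0 1 \<subseteq> ball 0 1"
    and "0 < c" and "c < 1"
    and "sup0 {hyp_deriv f z | z. z \<in> ball 0 1 \<and> cmod (f z) \<ge> c} < 1"
  shows "sup0 {hyp_deriv f z | z. z \<in> ball 0 1} < 1"
proof -
  note hol = assms(1) and into = assms(2) and c = assms(3,4)
  define H where "H = {hyp_deriv f z | z. z \<in> ball 0 1 \<and> cmod (f z) \<ge> c}"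
  define S where "S = sup0 H"
  have S1: "S < 1" using assms(5) unfolding S_def H_def .
  have fin: "\<And>z. cmod z < 1 \<Longrightarrow> cmod (f z) < 1" using into by (metis image_subset_iff mem_ball_0)
  have bddH: "bdd_above H" unfolding H_def
    using SP(1)[OF hol into] by (intro bdd_aboveI[of _ 1]) auto
  have upper: "hyp_deriv f z \<le> S" if "cmod z < 1" "c \<le> cmod (f z)" for z
  proof -
    have "hyp_deriv f z \<in> H" unfolding H_def using that by auto
    then show ?thesis unfolding S_def sup0_def using bddH by (auto intro: cSup_upper)
  qed
  define r where "r = (1 + c) / 2"
  have r: "0 < r" "r < 1" "c < r" using c unfolding r_def by auto
  have r2: "r^2 < 1" "0 < r^2" using sq_lt1[of r] r by auto
  define T where "T d = d - r * (1 - d^2) / (1 - r * d)" for d :: real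
  define L where "L t = ((1 - r^2) * t - r * (1 - t^2)) / (1 - r^2 * t^2)" for t :: real
  define P where "P d = (c / r < T d \<and> 0 < T d \<and> S < L (T d) \<and> 0 < L (T d))" for d
  have T1: "T 1 = 1" unfolding T_def by simp
  have L1: "L 1 = 1" unfolding L_def using r2 by simp
  have P1: "P 1" unfolding P_def T1 L1 using r c S1 by auto
  have limT: "(T \<longlongrightarrow> 1) (at_left 1)"
  proof -
    have "(T \<longlongrightarrow> T 1) (at_left 1)" unfolding T_def using r
      by (intro tendsto_intros) auto
    then show ?thesis using T1 by simp
  qed
  have limL: "((\<lambda>d. L (T d)) \<longlongrightarrow> 1) (at_left 1)"
  proof -
    have "((\<lambda>d. L (T d)) \<longlongrightarrow> ((1 - r^2) * 1 - r * (1 - 1^2)) / (1 - r^2 * 1^2)) (at_left 1)"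
      unfolding L_def using r2 by (intro tendsto_intros limT) auto
    then show ?thesis using r2 by simp
  qed
  have evP: "eventually P (at_left 1)"
  proof -
    have "c / r < 1" using r by simp
    have e1: "eventually (\<lambda>d. c / r < T d) (at_left 1)" by (rule order_tendstoD(1)[OF limT \<open>c / r < 1\<close>])
    have e2: "eventually (\<lambda>d. 0 < T d) (at_left 1)" by (rule order_tendstoD(1)[OF limT]) simp
    have e3: "eventually (\<lambda>d. S < L (T d)) (at_left 1)" by (rule order_tendstoD(1)[OF limL S1])
    have e4: "eventually (\<lambda>d. 0 < L (T d)) (at_left 1)" by (rule order_tendstoD(1)[OF limL]) simp
    show ?thesis using e1 e2 e3 e4 unfolding P_def by eventually_elim auto
  qed
  then obtain d0 where d0: "d0 < 1" "\<And>y. d0 < y \<Longrightarrow> y < 1 \<Longrightarrow> P y"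
    unfolding eventually_at_left_field by blast
  define d1 where "d1 = max d0 0"
  have d1: "d1 < 1" "0 \<le> d1" using d0 unfolding d1_def by auto
  have Pd: "P y" if "d1 < y" "y \<le> 1" for y
    using d0 that P1 unfolding d1_def by (cases "y = 1") auto
  have bound: "hyp_deriv f z0 \<le> d1" if z0: "cmod z0 < 1" for z0
  proof (rule ccontr)
    assume "\<not> hyp_deriv f z0 \<le> d1"
    define d where "d = hyp_deriv f z0"
    have dd1: "d1 < d" using \<open>\<not> hyp_deriv f z0 \<le> d1\<close> d_def by simp
    have dle1: "d \<le> 1" unfolding d_def using SP(1)[OF hol into z0] .
    have d0': "0 < d" using dd1 d1 by simp
    have Pd': "P d" using Pd dd1 dle1 by simp
    define a where "a = f z0"
    have a: "cmod a < 1" using fin z0 a_def by simp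
    have mz0: "cmod (-z0) < 1" using z0 by simp
    define g where "g = (\<lambda>x. mob a (f (mob (-z0) x)))"
    have hg: "g holomorphic_on ball 0 1" and ig: "g ` ball 0 1 \<subseteq> ball 0 1"
      unfolding g_def using comp_holo[OF hol into a mz0] by auto
    have gin: "\<And>x. cmod x < 1 \<Longrightarrow> cmod (g x) < 1" using ig by (metis image_subset_iff mem_ball_0)
    have g0: "g 0 = 0" unfolding g_def a_def by simp
    have hdg: "hyp_deriv g x = hyp_deriv f (mob (-z0) x)" if "cmod x < 1" for x
      unfolding g_def using hd_inv[OF hol into a mz0 that] .
    have dg0: "cmod (deriv g 0) = d"
      using hdg[of 0] hyp_deriv_at0[of g, OF g0] d_def by simp
    obtain h where holh: "h holomorphic_on ball 0 1" and gh: "\<And>z. cmod z < 1 \<Longrightarrow> g z = z * h z"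
      and dh0: "deriv g 0 = h 0"
      using Schwarz3[OF hg g0] by blast
    have h0: "cmod (h 0) = d" using dg0 dh0 by simp
    have hle: "cmod (h z) \<le> 1" if "cmod z < 1" for z
    proof (cases "z = 0")
      case True then show ?thesis using h0 dle1 by simp
    next
      case False
      have "cmod (g z) \<le> cmod z" using Schwarz_Lemma(1)[OF hg g0 gin that] .
      then have "cmod z * cmod (h z) \<le> cmod z * 1" using gh[OF that] by (simp add: norm_mult)
      then show ?thesis using False by simp
    qed
    have hcases: "(\<forall>z. cmod z < 1 \<longrightarrow> h z = h 0 \<and> cmod (h z) = 1) \<or> (\<forall>z. cmod z < 1 \<longrightarrow> cmod (h z) < 1)"
      by (rule norm_le1_cases[OF holh hle])
    define \<sigma> where "\<sigma> = (if a = 0 then 1 else sgn a)"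
    define v where "v = \<sigma> * cnj (sgn (h 0))"
    have h0nz: "h 0 \<noteq> 0" using h0 d0' by auto
    have v1: "cmod v = 1" unfolding v_def \<sigma>_def using h0nz by (simp add: norm_mult norm_sgn)
    have av: "cnj a * v * h 0 = of_real (cmod a * d)"
    proof -
      have "cnj a * \<sigma> = of_real (cmod a)" unfolding \<sigma>_def by (cases "a = 0") (simp_all add: cnj_sgn1)
      moreover have "cnj (sgn (h 0)) * h 0 = of_real d" using cnj_sgn2[of "h 0"] h0 by simp
      ultimately have "(cnj a * \<sigma>) * (cnj (sgn (h 0)) * h 0) = of_real (cmod a * d)" by simp
      then show ?thesis unfolding v_def by (simp add: algebra_simps)
    qed
    define w where "w = of_real r * v"
    have wr: "cmod w = r" unfolding w_def using v1 r by (simp add: norm_mult)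
    have w1: "cmod w < 1" using wr r by simp
    have wb: "w \<in> ball 0 1" using w1 by simp
    define e where "e = cmod (h w - h 0)"
    define s where "s = cmod (h w)"
    have F12: "e * (1 - r * d) \<le> r * (1 - d^2) \<and> (1 - r^2) * cmod (deriv h w) \<le> 1 - s^2"
      using hcases
    proof
      assume hc: "\<forall>z. cmod z < 1 \<longrightarrow> h z = h 0 \<and> cmod (h z) = 1"
      have hw: "h w = h 0" "cmod (h w) = 1" using hc w1 by blast+
      have e0: "e = 0" unfolding e_def hw(1) by simp
      have s1: "s = 1" unfolding s_def using hw(2) .
      have "((\<lambda>x. h 0) has_field_derivative 0) (at w)" by simp
      then have "(h has_field_derivative 0) (at w)"
        by (rule has_field_derivative_transform_within_open[OF _ open_ball wb]) (use hc in \<open>metis mem_ball_0\<close>)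
      then have "deriv h w = 0" by (rule DERIV_imp_deriv)
      moreover have "0 \<le> r * (1 - d^2)" using r dle1 d0' power_le_one[of d 2] by simp
      ultimately show ?thesis using e0 s1 by simp
    next
      assume hc: "\<forall>z. cmod z < 1 \<longrightarrow> cmod (h z) < 1"
      then have hin: "h ` ball 0 1 \<subseteq> ball 0 1" by auto
      have sp2: "e \<le> r * cmod (1 - cnj (h 0) * h w)"
        using SP2[OF holh hin w1] unfolding e_def wr .
      have "1 - cnj (h 0) * h w = (1 - cnj (h 0) * h 0) - cnj (h 0) * (h w - h 0)" by (simp add: algebra_simps)
      then have "cmod (1 - cnj (h 0) * h w) \<le> cmod (1 - cnj (h 0) * h 0) + cmod (cnj (h 0) * (h w - h 0))"
        by (metis norm_triangle_ineq4)
      moreover have "cmod (1 - cnj (h 0) * h 0) = 1 - d^2"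
      proof -
        have "(1 - cnj (h 0) * h 0) = of_real (1 - d^2)" unfolding cnj_mul_self h0 by simp
        then have "cmod (1 - cnj (h 0) * h 0) = abs (1 - d^2)" by (simp only: norm_of_real)
        then show ?thesis using dle1 d0' power_le_one[of d 2] by simp
      qed
      moreover have "cmod (cnj (h 0) * (h w - h 0)) = d * e" unfolding e_def using h0 by (simp add: norm_mult)
      ultimately have "cmod (1 - cnj (h 0) * h w) \<le> (1 - d^2) + d * e" by simp
      then have "r * cmod (1 - cnj (h 0) * h w) \<le> r * ((1 - d^2) + d * e)" using r by (intro mult_left_mono) auto
      then have "e \<le> r * (1 - d^2) + r * d * e" using sp2 by (simp add: algebra_simps)
      then have F1: "e * (1 - r * d) \<le> r * (1 - d^2)" by (simp add: algebra_simps)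
      have F2: "(1 - r^2) * cmod (deriv h w) \<le> 1 - s^2"
        using SP(2)[OF holh hin w1] unfolding wr s_def .
      show ?thesis using F1 F2 by simp
    qed
    have "r * d \<le> r * 1" using r dle1 by (intro mult_left_mono) auto
    then have rd: "0 < 1 - r * d" using r by linarith
    have eb: "e \<le> r * (1 - d^2) / (1 - r * d)" using F12 rd by (simp add: pos_le_divide_eq)
    have ds: "d \<le> s + e" unfolding s_def e_def using norm_triangle_ineq2[of "h 0" "h w"] h0 by (simp add: norm_minus_commute)
    define t where "t = T d"
    have Pt: "c / r < t" "0 < t" "S < L t" "0 < L t" using Pd' unfolding P_def t_def by auto
    have tde: "t \<le> d - e" unfolding t_def T_def using eb by simp
    have ts: "t \<le> s" using tde ds by simp
    have s1: "s \<le> 1" unfolding s_def using hle[OF w1] .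
    have gw: "g w = w * h w" using gh[OF w1] .
    have ngw: "cmod (g w) = r * s" unfolding gw s_def by (simp add: norm_mult wr mult.commute)
    have crs: "c \<le> r * s"
    proof -
      have "c < r * t" using Pt(1) r by (simp add: divide_less_eq mult.commute)
      also have "\<dots> \<le> r * s" using ts r by (intro mult_left_mono) auto
      finally show ?thesis by simp
    qed
    have reg: "0 \<le> Re (cnj a * g w)"
    proof -
      define q where "q = cnj a * v * (h w - h 0)"
      have "cnj a * g w = of_real r * (cnj a * v * h 0 + q)" unfolding gw unfolding w_def q_def by (simp add: algebra_simps)
      then have "Re (cnj a * g w) = r * (cmod a * d + Re q)" unfolding av by simp
      moreover have "cmod q = cmod a * e" unfolding q_def e_def using v1 by (simp add: norm_mult)
      moreover have "- cmod q \<le> Re q" using abs_Re_le_cmod[of q] by linarith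
      moreover have "cmod a * e \<le> cmod a * d" using tde Pt(2) by (intro mult_left_mono) auto
      ultimately show ?thesis using r by simp
    qed
    define Mw where "Mw = mob (-z0) w"
    have Mw1: "cmod Mw < 1" unfolding Mw_def using mob_norm_lt1[OF mz0 w1] .
    have fMw: "f Mw = mob (-a) (g w)" unfolding g_def Mw_def using mob_inv[OF a fin[OF Mw1[unfolded Mw_def]]] by simp
    have cf: "c \<le> cmod (f Mw)" unfolding fMw
      by (rule far_point[OF a gin[OF w1] _ reg c]) (use crs ngw in simp)
    have dh: "(h has_field_derivative deriv h w) (at w)" by (rule holomorphic_derivI[OF holh open_ball wb])
    have "((\<lambda>x. x * h x) has_field_derivative (1 * h w + deriv h w * w)) (at w)"
      by (rule DERIV_mult[OF DERIV_ident dh])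
    then have "(g has_field_derivative (1 * h w + deriv h w * w)) (at w)"
      by (rule has_field_derivative_transform_within_open[OF _ open_ball wb]) (use gh in simp)
    then have dgw: "deriv g w = h w + deriv h w * w" by (simp add: DERIV_imp_deriv)
    define Dg where "Dg = cmod (deriv g w)"
    have Dg: "s - r * cmod (deriv h w) \<le> Dg"
      unfolding Dg_def dgw s_def using norm_triangle_ineq2[of "h w" "- (deriv h w * w)"] by (simp add: norm_mult wr mult.commute)
    have hD: "(1 - r^2) * s - r * (1 - s^2) \<le> (1 - r^2) * Dg"
    proof -
      have "(1 - r^2) * (s - r * cmod (deriv h w)) \<le> (1 - r^2) * Dg" using Dg r2 by (intro mult_left_mono) auto
      moreover have "r * ((1 - r^2) * cmod (deriv h w)) \<le> r * (1 - s^2)" using F12 r by (intro mult_left_mono) auto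
      ultimately show ?thesis by (simp add: algebra_simps)
    qed
    have "L t \<le> (1 - r^2) * Dg / (1 - (r * s)^2)"
      unfolding L_def by (rule real_core[OF r(1,2) _ ts s1 _ hD]) (use Pt in \<open>auto simp: L_def Dg_def\<close>)
    also have "\<dots> = hyp_deriv g w" unfolding hyp_deriv_def Dg_def wr ngw ..
    also have "\<dots> = hyp_deriv f Mw" unfolding Mw_def by (rule hdg[OF w1])
    also have "\<dots> \<le> S" by (rule upper[OF Mw1 cf])
    finally show False using Pt(3) by simp
  qed
  have "hyp_deriv f 0 \<in> {hyp_deriv f z | z. z \<in> ball 0 1}" by auto
  then have ne: "{hyp_deriv f z | z. z \<in> ball 0 1} \<noteq> {}" by blast
  have "sup0 {hyp_deriv f z | z. z \<in> ball 0 1} \<le> d1"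
    unfolding sup0_def using ne bound by (auto intro!: cSup_least)
  then show ?thesis using d1 by simp
qed

end
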